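(* Let $d\in\mathbb{N}$ and let $\mathcal{P}$ be a partition of $\mathbb{R}^{d}$. Suppose there exists $D\in(0,\infty)$ such that every $X\in\mathcal{P}$ satisfies $\operatorname{diam}(X)<D$. Then for any function $\epsilon:\mathbb{R}^{d}\to(0,\infty)$ there exists $\vec{p}\in\mathbb{R}^{d}$ such that $|\mathcal{N}_{\epsilon(\vec{p})}(\vec{p})|\geq d+1$.
   Context: On $\mathbb{R}^d$ use $d_{max}(\vec{x},\vec{y})=\max_i|x_i-y_i|$; $\operatorname{diam}(X)=\sup\{d_{max}(\vec{x},\vec{y}):\vec{x},\vec{y}\in X\}$; $\overline{B}_{r}(\vec{p})=\{\vec{x}: d_{max}(\vec{x},\vec{p})\le r\}$. For a partition $\mathcal{P}$ and $r>0$, $\mathcal{N}_{r}(\vec{p})=\{X\in\mathcal{P}: X\cap\overline{B}_{r}(\vec{p})\neq\emptyset\}$. *)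

theory Defs
  imports "HOL-Analysis.Analysis"
begin

definition dmax :: "real^'n \<Rightarrow> real^'n \<Rightarrow> real" where
  "dmax x y = Max (range (\<lambda>i. \<bar>x $ i - y $ i\<bar>))"

text \<open>Diameter w.r.t. dmax, valued in the extended reals (so unbounded sets have diameter infinity).\<close>
definition diam_max :: "(real^'n) set \<Rightarrow> ereal" where
  "diam_max X = (SUP xy \<in> X \<times> X. ereal (dmax (fst xy) (snd xy)))"

definition cball_max :: "real^'n \<Rightarrow> real \<Rightarrow> (real^'n) set" where
  "cball_max p r = {x. dmax x p \<le> r}"

definition is_partition :: "'a set set \<Rightarrow> 'a set \<Rightarrow> bool" where
  "is_partition P S \<longleftrightarrow> (\<forall>X\<in>P. X \<noteq> {}) \<and>
     (\<forall>X\<in>P. \<forall>Y\<in>P. X \<noteq> Y \<longrightarrow> X \<inter> Y = {}) \<and> \<Union>P = S"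

definition nbhd_sets :: "(real^'n) set set \<Rightarrow> real \<Rightarrow> real^'n \<Rightarrow> (real^'n) set set" where
  "nbhd_sets P r p = {X \<in> P. X \<inter> cball_max p r \<noteq> {}}"

end

theory Submission
  imports Defs
begin

lemma kuhn_distinct:
  fixes lab :: "(nat \<Rightarrow> nat) \<Rightarrow> nat \<Rightarrow> nat"
  assumes "0 < p"
    and "\<forall>x j. (\<forall>j. x j \<le> p) \<and> j < n \<and> x j = 0 \<longrightarrow> lab x j = 0"
    and "\<forall>x j. (\<forall>j. x j \<le> p) \<and> j < n  \<and> x j = p \<longrightarrow> lab x j = 1"
  shows "\<exists>b S. (\<forall>j<n. b j < p) \<and> finite S \<and> card S = Suc n \<and> inj_on lab S \<and>
     (\<forall>x\<in>S. \<forall>j<n. b j \<le> x j \<and> x j \<le> b j + 1)"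
proof -
  have "odd (card {s. ksimplex p n s \<and> (reduced n\<circ>lab) ` s = {..n}})"
    by (rule kuhn_combinatorial[OF assms])
  then have "{s. ksimplex p n s \<and> (reduced n\<circ>lab) ` s = {..n}} \<noteq> {}"
    by (metis card.empty odd_pos gr_implies_not0)
  then obtain s where ks: "ksimplex p n s" and rl: "(reduced n\<circ>lab) ` s = {..n}" by auto
  then obtain b u where kb: "kuhn_simplex p n b u s" by (auto elim: ksimplex.cases)
  have cs: "card s = Suc n" using ksimplex_card[OF ks] .
  have fs: "finite s" using cs card.infinite by fastforce
  have "inj_on (reduced n\<circ>lab) s"
    by (rule eq_card_imp_inj_on[OF fs]) (simp only: rl cs card_atMost)
  then have inj: "inj_on lab s" by (rule inj_on_imageI2)
  interpret kuhn_simplex p n b u s by (rule kb)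
  have "\<forall>x\<in>s. \<forall>j<n. b j \<le> x j \<and> x j \<le> b j + 1"
    unfolding s_eq enum_def by auto
  moreover have "\<forall>j<n. b j < p" using base by auto
  ultimately show ?thesis using fs cs inj by blast
qed

lemma dmax_ge: "\<bar>x $ i - y $ i\<bar> \<le> dmax x y"
  unfolding dmax_def by (rule Max_ge) auto

lemma dmax_le: "(\<And>i. \<bar>x $ i - y $ i\<bar> \<le> r) \<Longrightarrow> dmax x y \<le> r"
  unfolding dmax_def by (subst Max_le_iff) auto

lemma diam_bound:
  assumes "diam_max X < ereal D" "x \<in> X" "y \<in> X"
  shows "dmax x y < D"
proof -
  have "ereal (dmax x y) \<le> diam_max X"
    unfolding diam_max_def using assms(2,3) by (intro SUP_upper2[of "(x,y)"]) auto
  with assms(1) have "ereal (dmax x y) < ereal D" by (rule le_less_trans[rotated])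
  then show ?thesis by simp
qed

lemma step:
  fixes P :: "(real^'n) set set" and D :: real
  assumes part: "is_partition P UNIV"
    and D: "D > 0"
    and diam: "\<forall>X\<in>P. diam_max X < ereal D"
  shows "\<exists>c F. (\<forall>i. 0 \<le> c $ i \<and> c $ i \<le> D) \<and> F \<subseteq> P \<and> finite F \<and> card F = CARD('n) + 1 \<and>
     (\<forall>X\<in>F. \<exists>y\<in>X. \<forall>i. \<bar>y $ i - c $ i\<bar> \<le> D / real (Suc k))"
proof -
  define n where "n = CARD('n)"
  define p where "p = Suc k"
  define h where "h = D / real p"
  have hpos: "h > 0" unfolding h_def p_def using D by simp
  have hp: "h * real p = D" unfolding h_def p_def by simp
  obtain e where e: "bij_betw e {0..<n} (UNIV::'n set)"
    using ex_bij_betw_nat_finite[of "UNIV::'n set"] unfolding n_def by auto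
  define \<iota> where "\<iota> = inv_into {0..<n} e"
  have \<iota>1: "\<iota> i < n" for i using e unfolding \<iota>_def
    by (metis atLeastLessThan_iff bij_betw_def inv_into_into UNIV_I)
  have \<iota>2: "e (\<iota> i) = i" for i using e unfolding \<iota>_def
    by (simp add: bij_betw_inv_into_right)
  have \<iota>3: "j < n \<Longrightarrow> \<iota> (e j) = j" for j using e unfolding \<iota>_def
    by (simp add: bij_betw_inv_into_left)
  define g :: "(nat \<Rightarrow> nat) \<Rightarrow> real^'n" where "g x = (\<chi> i. h * real (x (\<iota> i)))" for x
  define mem where "mem y = (SOME X. X \<in> P \<and> y \<in> X)" for y :: "real^'n"
  have mem: "mem y \<in> P \<and> y \<in> mem y" for y
  proof -
    have "\<exists>X. X \<in> P \<and> y \<in> X" using part unfolding is_partition_def by auto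
    then show ?thesis unfolding mem_def by (rule someI_ex)
  qed
  define L where "L (X::(real^'n) set) j = (if \<exists>y\<in>X. y $ e j \<le> 0 then 0 else (1::nat))" for X j
  define lab where "lab x = L (mem (g x))" for x
  have l0: "\<forall>x j. (\<forall>j. x j \<le> p) \<and> j < n \<and> x j = 0 \<longrightarrow> lab x j = 0"
  proof (intro allI impI)
    fix x j assume a: "(\<forall>j. x j \<le> p) \<and> j < n \<and> x j = 0"
    have "g x $ e j \<le> 0" using a \<iota>3 unfolding g_def by simp
    then show "lab x j = 0" unfolding lab_def L_def using mem[of "g x"] by auto
  qed
  have l1: "\<forall>x j. (\<forall>j. x j \<le> p) \<and> j < n \<and> x j = p \<longrightarrow> lab x j = 1"
  proof (intro allI impI)
    fix x j assume a: "(\<forall>j. x j \<le> p) \<and> j < n \<and> x j = p"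
    have gx: "g x $ e j = D" using a \<iota>3 hp unfolding g_def by simp
    have "\<not> (\<exists>y\<in>mem (g x). y $ e j \<le> 0)"
    proof
      assume "\<exists>y\<in>mem (g x). y $ e j \<le> 0"
      then obtain y where y: "y \<in> mem (g x)" "y $ e j \<le> 0" by auto
      have "dmax y (g x) < D" using diam mem[of "g x"] y(1) diam_bound by blast
      moreover have "\<bar>y $ e j - g x $ e j\<bar> \<le> dmax y (g x)" by (rule dmax_ge)
      ultimately show False using gx y(2) by simp
    qed
    then show "lab x j = 1" unfolding lab_def L_def by auto
  qed
  obtain b S where bS: "\<forall>j<n. b j < p" "finite S" "card S = Suc n" "inj_on lab S"
     "\<forall>x\<in>S. \<forall>j<n. b j \<le> x j \<and> x j \<le> b j + 1"
    using kuhn_distinct[of p n lab, OF _ l0 l1] unfolding p_def by auto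
  define F where "F = (mem \<circ> g) ` S"
  have inj: "inj_on (mem \<circ> g) S"
    using bS(4) unfolding inj_on_def lab_def by auto
  have cF: "card F = CARD('n) + 1" unfolding F_def using card_image[OF inj] bS(3) n_def by simp
  have FP: "F \<subseteq> P" unfolding F_def using mem by auto
  have fF: "finite F" unfolding F_def using bS(2) by simp
  have c: "\<forall>i. 0 \<le> g b $ i \<and> g b $ i \<le> D"
  proof
    fix i
    have "b (\<iota> i) \<le> p" using bS(1) \<iota>1 less_imp_le by blast
    then have "h * real (b (\<iota> i)) \<le> h * real p" using hpos by simp
    then show "0 \<le> g b $ i \<and> g b $ i \<le> D" unfolding g_def using hpos hp by simp
  qed
  have near: "\<forall>X\<in>F. \<exists>y\<in>X. \<forall>i. \<bar>y $ i - g b $ i\<bar> \<le> D / real (Suc k)"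
  proof
    fix X assume "X \<in> F"
    then obtain x where x: "x \<in> S" "X = mem (g x)" unfolding F_def by auto
    have "\<bar>g x $ i - g b $ i\<bar> \<le> D / real (Suc k)" for i
    proof -
      have "b (\<iota> i) \<le> x (\<iota> i) \<and> x (\<iota> i) \<le> b (\<iota> i) + 1" using bS(5) x(1) \<iota>1 by blast
      then have "\<bar>real (x (\<iota> i)) - real (b (\<iota> i))\<bar> \<le> 1" by linarith
      then have "h * \<bar>real (x (\<iota> i)) - real (b (\<iota> i))\<bar> \<le> h" using hpos
        by (simp add: mult_left_le)
      moreover have "g x $ i - g b $ i = h * (real (x (\<iota> i)) - real (b (\<iota> i)))"
        unfolding g_def by (simp add: right_diff_distrib)
      ultimately have "\<bar>g x $ i - g b $ i\<bar> \<le> h" using hpos by (simp add: abs_mult)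
      then show ?thesis unfolding h_def p_def .
    qed
    then show "\<exists>y\<in>X. \<forall>i. \<bar>y $ i - g b $ i\<bar> \<le> D / real (Suc k)"
      using x mem[of "g x"] by blast
  qed
  show ?thesis using c FP fF cF near by blast
qed

theorem mainTheorem4:
  fixes P :: "(real^'n) set set" and D :: real and \<epsilon> :: "real^'n \<Rightarrow> real"
  assumes "is_partition P UNIV"
    and "D > 0"
    and "\<forall>X\<in>P. diam_max X < ereal D"
    and "\<forall>p. \<epsilon> p > 0"
  shows "\<exists>p. \<exists>F \<subseteq> nbhd_sets P (\<epsilon> p) p. finite F \<and> card F = CARD('n) + 1"
proof -
  have "\<forall>k. \<exists>c F. (\<forall>i. 0 \<le> c $ i \<and> c $ i \<le> D) \<and> F \<subseteq> P \<and> finite F \<and> card F = CARD('n) + 1 \<and>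
     (\<forall>X\<in>F. \<exists>y\<in>X. \<forall>i. \<bar>y $ i - c $ i\<bar> \<le> D / real (Suc k))"
    using step[OF assms(1-3)] by blast
  then obtain c F where cF: "\<And>k. (\<forall>i. 0 \<le> c k $ i \<and> c k $ i \<le> D) \<and> F k \<subseteq> P \<and> finite (F k) \<and>
     card (F k) = CARD('n) + 1 \<and> (\<forall>X\<in>F k. \<exists>y\<in>X. \<forall>i. \<bar>y $ i - c k $ i\<bar> \<le> D / real (Suc k))"
    by metis
  have "range c \<subseteq> cbox 0 (\<chi> i. D)" using cF by (auto simp: mem_box_cart)
  then have "bounded (range c)" using bounded_cbox bounded_subset by blast
  then obtain z r where r: "strict_mono r" "(c \<circ> r) \<longlonglongrightarrow> z"
    using bounded_imp_convergent_subsequence by blast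
  define t where "t = \<epsilon> z"
  have t: "t > 0" using assms(4) t_def by simp
  obtain N where N: "\<And>m. m \<ge> N \<Longrightarrow> dist ((c \<circ> r) m) z < t / 2"
    using r(2) t unfolding lim_sequentially by (metis half_gt_zero)
  obtain M :: nat where M: "D / t * 2 < real M" using reals_Archimedean2 by blast
  define m where "m = max N M"
  define k where "k = r m"
  have "m \<le> r m" using r(1) by (rule seq_suble)
  then have kM: "real M \<le> real (Suc k)" unfolding k_def m_def by simp
  have "D / real (Suc k) \<le> t / 2"
  proof -
    have "D * 2 < real M * t" using M t by (simp add: field_simps)
    also have "\<dots> \<le> real (Suc k) * t" using kM t by (simp add: mult_right_mono)
    finally show ?thesis by (simp add: field_simps)
  qed
  moreover have dz: "dist (c k) z < t / 2" using N[of m] unfolding k_def m_def by simp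
  ultimately have sub: "F k \<subseteq> nbhd_sets P (\<epsilon> z) z"
  proof -
    assume h1: "D / real (Suc k) \<le> t / 2"
    show ?thesis
    proof
      fix X assume X: "X \<in> F k"
      then obtain y where y: "y \<in> X" "\<forall>i. \<bar>y $ i - c k $ i\<bar> \<le> D / real (Suc k)" using cF by blast
      have "\<bar>y $ i - z $ i\<bar> \<le> t" for i
      proof -
        have "\<bar>c k $ i - z $ i\<bar> \<le> dist (c k) z"
          using dist_vec_nth_le[of "c k" i z] by (simp add: dist_real_def)
        then show ?thesis using y(2)[rule_format, of i] h1 dz by linarith
      qed
      then have "dmax y z \<le> \<epsilon> z" unfolding t_def by (rule dmax_le)
      then have "y \<in> X \<inter> cball_max z (\<epsilon> z)" using y(1) unfolding cball_max_def by simp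
      then show "X \<in> nbhd_sets P (\<epsilon> z) z" unfolding nbhd_sets_def using X cF by blast
    qed
  qed
  show ?thesis using sub cF by blast
qed

end
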